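(* Let $\mathbb{F}_q$ be the finite field with $q$ elements and let $f(T)=T^2+aT+b\in\mathbb{F}_q[T]$ be irreducible. Then for every $\gamma\in\mathbb{F}_q^{*}$, the cyclotomic function field $F(\Lambda_M)$ with modulus $M=f$ is $\mathbb{F}_q$-isomorphic to the function field $\mathbb{F}_q(v,y)$ defined over $\mathbb{F}_q$ by $$y^{q-1}=-\frac{\gamma v^2+av+(b/\gamma)}{v^q-v}.$$
   Context: Let $x$ be transcendental over $\mathbb{F}_q$, $R=\mathbb{F}_q[x]$, $F=\mathbb{F}_q(x)$, and $\overline{F}$ a fixed algebraic closure of $F$. Make $\overline{F}$ an $R$-module via $z^{g(x)}=g(\varphi)(z)$ for $g\in R$, where $\varphi\in\operatorname{End}_{\mathbb{F}_q}(\overline{F})$ is $\varphi(z)=z^q+xz$ (so $z^{\sum a_ix^i}=\sum a_i\varphi^i(z)$). For nonzero $M\in R$, $\Lambda_M=\{z\in\overline{F}: z^M=0\}$, and the cyclotomic function field with modulus $M$ is $F(\Lambda_M)$, the subfield of $\overline{F}$ generated over $F$ by $\Lambda_M$ (here $M$ is viewed as a polynomial in $x$). *)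

theory Defs
  imports "HOL-Computational_Algebra.Computational_Algebra"
begin

text \<open>Embedding of the constant field F_q (a finite field type 'f) into the
  fixed algebraically closed field 'a (the algebraic closure of F = F_q(x)).\<close>
definition is_field_hom :: "('f::field \<Rightarrow> 'a::field) \<Rightarrow> bool" where
  "is_field_hom \<iota> \<longleftrightarrow> \<iota> 1 = 1 \<and> (\<forall>u w. \<iota> (u + w) = \<iota> u + \<iota> w) \<and> (\<forall>u w. \<iota> (u * w) = \<iota> u * \<iota> w)"

definition is_subfield :: "'a::field set \<Rightarrow> bool" where
  "is_subfield K \<longleftrightarrow> 0 \<in> K \<and> 1 \<in> K \<and> (\<forall>u\<in>K. \<forall>w\<in>K. u + w \<in> K \<and> u * w \<in> K)
     \<and> (\<forall>u\<in>K. - u \<in> K \<and> inverse u \<in> K)"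

definition gen_field :: "'a::field set \<Rightarrow> 'a set" where
  "gen_field S = \<Inter>{K. is_subfield K \<and> S \<subseteq> K}"

definition transcendental_over :: "('f::field \<Rightarrow> 'a::field) \<Rightarrow> 'a \<Rightarrow> bool" where
  "transcendental_over \<iota> x \<longleftrightarrow> (\<forall>p::'f poly. p \<noteq> 0 \<longrightarrow> poly (map_poly \<iota> p) x \<noteq> 0)"

definition rat_fun_field :: "('f::field \<Rightarrow> 'a::field) \<Rightarrow> 'a \<Rightarrow> 'a set" where
  "rat_fun_field \<iota> x = gen_field (range \<iota> \<union> {x})"

definition algebraic_over :: "'a::field set \<Rightarrow> bool" where
  "algebraic_over K \<longleftrightarrow> (\<forall>z. \<exists>p::'a poly. p \<noteq> 0 \<and> (\<forall>i. coeff p i \<in> K) \<and> poly p z = 0)"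

text \<open>Carlitz action: z^g = \<Sum> a_i \<phi>^i(z) for g = \<Sum> a_i x^i, with \<phi>(z) = z^q + x z, q = |F_q|.\<close>
definition carlitz_phi :: "'a::field \<Rightarrow> nat \<Rightarrow> 'a \<Rightarrow> 'a" where
  "carlitz_phi x q z = z ^ q + x * z"

definition carlitz_act :: "('f::field \<Rightarrow> 'a::field) \<Rightarrow> 'a \<Rightarrow> nat \<Rightarrow> 'f poly \<Rightarrow> 'a \<Rightarrow> 'a" where
  "carlitz_act \<iota> x q g z = (\<Sum>i\<le>degree g. \<iota> (coeff g i) * (carlitz_phi x q ^^ i) z)"

definition carlitz_torsion :: "('f::field \<Rightarrow> 'a::field) \<Rightarrow> 'a \<Rightarrow> nat \<Rightarrow> 'f poly \<Rightarrow> 'a set" where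
  "carlitz_torsion \<iota> x q M = {z. carlitz_act \<iota> x q M z = 0}"

definition cyclotomic_ff :: "('f::field \<Rightarrow> 'a::field) \<Rightarrow> 'a \<Rightarrow> nat \<Rightarrow> 'f poly \<Rightarrow> 'a set" where
  "cyclotomic_ff \<iota> x q M = gen_field (rat_fun_field \<iota> x \<union> carlitz_torsion \<iota> x q M)"

text \<open>Evaluation of a bivariate polynomial Q(V,Y) (Y outer variable, coefficients in F_q[V])
  at (v,y), via \<iota>.\<close>
definition eval2 :: "('f::field \<Rightarrow> 'a::field) \<Rightarrow> 'f poly poly \<Rightarrow> 'a \<Rightarrow> 'a \<Rightarrow> 'a" where
  "eval2 \<iota> Q v y = poly (map_poly (\<lambda>c. poly (map_poly \<iota> c) v) Q) y"

text \<open>The field L (a subfield of 'a, with constants \<iota>(F_q)) is F_q-isomorphic to the function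
  field F_q(v,y) = Frac(F_q[V,Y]/(P)) defined by P(v,y)=0: there are v, y in L generating L over
  \<iota>(F_q) such that the kernel of evaluation F_q[V,Y] \<rightarrow> L at (v,y) is exactly the ideal (P).\<close>
definition Fq_iso_function_field :: "('f::field \<Rightarrow> 'a::field) \<Rightarrow> 'a set \<Rightarrow> 'f poly poly \<Rightarrow> bool" where
  "Fq_iso_function_field \<iota> L P \<longleftrightarrow>
     (\<exists>v\<in>L. \<exists>y\<in>L. gen_field (range \<iota> \<union> {v, y}) = L \<and>
        (\<forall>Q. eval2 \<iota> Q v y = 0 \<longleftrightarrow> P dvd Q))"

end

theory Submission
  imports Defs
begin

lemma map_poly_add_gen:
  assumes "h 0 = 0" "\<And>u w. h (u + w) = h u + h w"
  shows "map_poly h (p + q) = map_poly h p + map_poly h q"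
  by (intro poly_eqI) (simp add: coeff_map_poly assms)

lemma map_poly_mult_gen:
  fixes h :: "'b::comm_ring_1 \<Rightarrow> 'c::comm_ring_1"
  assumes h0: "h 0 = 0" and ha: "\<And>u w. h (u + w) = h u + h w" and hm: "\<And>u w. h (u * w) = h u * h w"
  shows "map_poly h (p * q) = map_poly h p * map_poly h q"
proof (induction p)
  case 0 then show ?case by simp
next
  case (pCons c p)
  have "map_poly h (pCons c p * q) = map_poly h (smult c q + pCons 0 (p * q))"
    by simp
  also have "\<dots> = smult (h c) (map_poly h q) + pCons 0 (map_poly h p * map_poly h q)"
    by (simp add: map_poly_add_gen[OF h0 ha] map_poly_smult[OF h0 hm] map_poly_pCons[of h, OF h0] pCons.IH h0)
  also have "\<dots> = map_poly h (pCons c p) * map_poly h q"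
    by (simp add: map_poly_pCons[of h, OF h0])
  finally show ?case .
qed

definition Ev :: "('f::field \<Rightarrow> 'a::field) \<Rightarrow> 'a \<Rightarrow> 'f poly \<Rightarrow> 'a" where
  "Ev \<iota> z p = poly (map_poly \<iota> p) z"

context
  fixes \<iota> :: "'f::field \<Rightarrow> 'a::field"
  assumes hom: "is_field_hom \<iota>"
begin

lemma hom1: "\<iota> 1 = 1" using hom by (simp add: is_field_hom_def)
lemma hom_add: "\<iota> (u + w) = \<iota> u + \<iota> w" using hom by (simp add: is_field_hom_def)
lemma hom_mult: "\<iota> (u * w) = \<iota> u * \<iota> w" using hom by (simp add: is_field_hom_def)
lemma hom0: "\<iota> 0 = 0"
  using hom_add[of 0 0] by (metis add.right_neutral add_left_cancel)
lemma hom_uminus: "\<iota> (- u) = - \<iota> u"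
  using hom_add[of u "-u"] hom0 by (metis neg_eq_iff_add_eq_0 right_minus)
lemma hom_diff: "\<iota> (u - w) = \<iota> u - \<iota> w"
  using hom_add[of u "-w"] hom_uminus[of w] by simp
lemma hom_eq0: "\<iota> u = 0 \<longleftrightarrow> u = 0"
proof
  assume "\<iota> u = 0"
  show "u = 0"
  proof (rule ccontr)
    assume "u \<noteq> 0"
    then have "\<iota> (u * inverse u) = 1" using hom1 by simp
    then show False using \<open>\<iota> u = 0\<close> hom_mult by simp
  qed
qed (simp add: hom0)
lemma hom_inj: "inj \<iota>"
  by (rule injI) (metis hom_diff hom_eq0 right_minus_eq)
lemma hom_power: "\<iota> (u ^ k) = \<iota> u ^ k"
  by (induction k) (simp_all add: hom1 hom_mult)
lemma hom_of_nat: "\<iota> (of_nat k) = of_nat k"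
  by (induction k) (simp_all add: hom0 hom1 hom_add)
lemma hom_inverse: "\<iota> (inverse u) = inverse (\<iota> u)"
proof (cases "u = 0")
  case True then show ?thesis by (simp add: hom0)
next
  case False
  then have "\<iota> u * \<iota> (inverse u) = 1" by (metis hom1 hom_mult right_inverse)
  then show ?thesis by (metis inverse_unique)
qed
lemma hom_divide: "\<iota> (u / w) = \<iota> u / \<iota> w"
  by (simp add: divide_inverse hom_mult hom_inverse)

lemmas hom_simps = hom0 hom1 hom_add hom_mult hom_uminus hom_diff hom_power hom_of_nat hom_divide hom_inverse hom_eq0

lemma map_poly_hom_add: "map_poly \<iota> (p + q) = map_poly \<iota> p + map_poly \<iota> q"
  by (rule map_poly_add_gen) (simp_all add: hom_simps)
lemma map_poly_hom_mult: "map_poly \<iota> (p * q) = map_poly \<iota> p * map_poly \<iota> q"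
  by (rule map_poly_mult_gen) (simp_all add: hom_simps)
lemma map_poly_hom_diff: "map_poly \<iota> (p - q) = map_poly \<iota> p - map_poly \<iota> q"
  by (intro poly_eqI) (simp add: coeff_map_poly hom_simps)


lemma Ev_add: "Ev \<iota> z (p + q) = Ev \<iota> z p + Ev \<iota> z q"
  by (simp add: Ev_def map_poly_hom_add)
lemma Ev_mult: "Ev \<iota> z (p * q) = Ev \<iota> z p * Ev \<iota> z q"
  by (simp add: Ev_def map_poly_hom_mult)
lemma Ev_diff: "Ev \<iota> z (p - q) = Ev \<iota> z p - Ev \<iota> z q"
  by (simp add: Ev_def map_poly_hom_diff)
lemma Ev_0: "Ev \<iota> z 0 = 0" by (simp add: Ev_def)
lemma Ev_1: "Ev \<iota> z 1 = 1" by (simp add: Ev_def hom_simps)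
lemma Ev_const: "Ev \<iota> z [:c:] = \<iota> c" by (simp add: Ev_def map_poly_pCons hom_simps)
lemma Ev_monom: "Ev \<iota> z (monom c k) = \<iota> c * z ^ k"
  by (simp add: Ev_def map_poly_monom hom_simps poly_monom)
lemma Ev_X: "Ev \<iota> z [:0, 1:] = z" by (simp add: Ev_def map_poly_pCons hom_simps)
lemma Ev_power: "Ev \<iota> z (p ^ k) = Ev \<iota> z p ^ k"
  by (induction k) (simp_all add: Ev_1 Ev_mult)
lemma Ev_smult: "Ev \<iota> z (smult c p) = \<iota> c * Ev \<iota> z p"
  by (simp add: Ev_def map_poly_smult hom_simps)
lemma Ev_pCons: "Ev \<iota> z (pCons c p) = \<iota> c + z * Ev \<iota> z p"
  by (simp add: Ev_def map_poly_pCons hom_simps)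
lemma Ev_hom: "Ev \<iota> (\<iota> c) p = \<iota> (poly p c)"
  by (induction p) (simp_all add: Ev_pCons Ev_0 hom_simps)

end

section \<open>Finite fields\<close>

lemma card_ge2: "card (UNIV :: 'f::{finite,field} set) \<ge> 2"
proof -
  have "{0, 1} \<subseteq> (UNIV :: 'f set)" by simp
  then have "card {0, 1 :: 'f} \<le> card (UNIV :: 'f set)" by (intro card_mono) auto
  then show ?thesis by simp
qed

lemma ff_power_card:
  fixes x :: "'f :: {finite,field}"
  shows "x ^ card (UNIV :: 'f set) = x"
proof (cases "x = 0")
  case False
  have "x * (\<Prod>y\<in>UNIV-{0}. x * y) = x * x ^ (card (UNIV :: 'f set) - 1) * \<Prod>(UNIV-{0})"
    by (simp add: prod.distrib mult_ac)
  also have "x * x ^ (card (UNIV :: 'f set) - 1) = x ^ Suc (card (UNIV :: 'f set) - 1)"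
    by (subst power_Suc) auto
  also have "Suc (card (UNIV :: 'f set) - 1) = card (UNIV :: 'f set)"
    using finite_UNIV_card_ge_0[where ?'a = 'f] by simp
  also have "(\<Prod>y\<in>UNIV-{0}. x * y) = (\<Prod>y\<in>UNIV-{0}. y)"
    by (rule prod.reindex_bij_witness[of _ "\<lambda>y. y / x" "\<lambda>y. x * y"]) (use False in auto)
  finally show ?thesis
    by simp
qed (use finite_UNIV_card_ge_0[where ?'a = 'f] in auto)

lemma ff_binom_vanish:
  assumes "0 < k" "k < card (UNIV :: 'f::{finite,field} set)"
  shows "(of_nat (card (UNIV :: 'f set) choose k) :: 'f) = 0"
proof -
  define q where "q = card (UNIV :: 'f set)"
  have q2: "q \<ge> 2" using card_ge2[where 'f='f] by (simp add: q_def)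
  have eq: "[:1,1:]^q = monom 1 q + (1::'f poly)"
  proof (rule poly_eqI_degree_lead_coeff[where n=q and A=UNIV])
    show "coeff ([:1,1:]^q) q = coeff (monom 1 q + (1::'f poly)) q"
      using q2 by (simp add: coeff_linear_poly_power)
    show "q \<le> card (UNIV :: 'f set)" by (simp add: q_def)
    show "degree ([:1,1:]^q :: 'f poly) \<le> q"
      using degree_power_le[of "[:1,1::'f:]" q] by simp
    show "degree (monom 1 q + (1::'f poly)) \<le> q"
      by (rule degree_add_le) (simp_all add: degree_monom_le)
    fix z :: 'f
    show "poly ([:1,1:]^q) z = poly (monom 1 q + 1) z"
      using ff_power_card[of "1+z"] ff_power_card[of z]
      by (simp add: poly_monom q_def add.commute)
  qed
  have "coeff ([:1,1:]^q) k = coeff (monom 1 q + (1::'f poly)) k" by (simp only: eq)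
  then show ?thesis using assms by (simp add: coeff_linear_poly_power q_def coeff_1)
qed

section \<open>Frobenius in the big field\<close>

context
  fixes \<iota> :: "'f::{finite,field} \<Rightarrow> 'a::field"
  assumes hom: "is_field_hom \<iota>"
begin

lemma frob_add: "(u + w :: 'a) ^ card (UNIV :: 'f set) = u ^ card (UNIV :: 'f set) + w ^ card (UNIV :: 'f set)"
proof -
  define q where "q = card (UNIV :: 'f set)"
  have q2: "q \<ge> 2" using card_ge2[where 'f='f] by (simp add: q_def)
  have "(u + w) ^ q = (\<Sum>k\<le>q. of_nat (q choose k) * u ^ k * w ^ (q - k))"
    by (rule binomial_ring)
  also have "\<dots> = (\<Sum>k\<in>{0,q}. of_nat (q choose k) * u ^ k * w ^ (q - k))"
  proof (intro sum.mono_neutral_right ballI)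
    fix k assume "k \<in> {..q} - {0, q}"
    hence k: "k > 0" "k < q" by auto
    have "(of_nat (q choose k) :: 'a) = \<iota> (of_nat (q choose k))"
      by (simp add: hom_of_nat[OF hom])
    also have "\<dots> = 0" using ff_binom_vanish[of k, where 'f='f] k by (simp add: q_def hom0[OF hom])
    finally show "of_nat (q choose k) * u ^ k * w ^ (q - k) = 0" by simp
  qed auto
  finally show ?thesis using q2 by (simp add: q_def add.commute)
qed

lemma frob_mult_const: "(\<iota> c * u) ^ card (UNIV :: 'f set) = \<iota> c * u ^ card (UNIV :: 'f set)"
  by (simp add: power_mult_distrib hom_power[OF hom, symmetric] ff_power_card)

lemma frob_const: "\<iota> c ^ card (UNIV :: 'f set) = \<iota> c"
  by (simp add: hom_power[OF hom, symmetric] ff_power_card)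

lemma frob_uminus: "(- u :: 'a) ^ card (UNIV :: 'f set) = - (u ^ card (UNIV :: 'f set))"
  using frob_mult_const[of "-1" u] by (simp add: hom_uminus[OF hom] hom1[OF hom])

lemma frob_diff: "(u - w :: 'a) ^ card (UNIV :: 'f set) = u ^ card (UNIV :: 'f set) - w ^ card (UNIV :: 'f set)"
  using frob_add[of u "-w"] frob_uminus[of w] by simp

lemma roots_Xq_X: "{z :: 'a. z ^ card (UNIV :: 'f set) = z} = range \<iota>"
proof -
  define q where "q = card (UNIV :: 'f set)"
  have q2: "q \<ge> 2" using card_ge2[where 'f='f] by (simp add: q_def)
  define p :: "'a poly" where "p = monom 1 q - [:0,1:]"
  have pz: "poly p z = 0 \<longleftrightarrow> z ^ q = z" for z by (simp add: p_def poly_monom)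
  have "p = monom 1 q + [:0,-1:]" by (simp add: p_def)
  then have dp: "degree p = q"
    using q2 by (simp add: degree_add_eq_left degree_monom_eq)
  have p0: "p \<noteq> 0" using dp q2 by auto
  have sub: "range \<iota> \<subseteq> {z. z ^ q = z}"
    using frob_const by (auto simp: q_def)
  have fin: "finite {z :: 'a. z ^ q = z}" using poly_roots_finite[OF p0] by (simp add: pz)
  have c1: "card {z :: 'a. z ^ q = z} \<le> q" using card_poly_roots_bound[OF p0] by (simp add: pz dp)
  have c2: "card (range \<iota>) = q" using hom_inj[OF hom] by (simp add: card_image q_def)
  have "card (range \<iota>) = card {z :: 'a. z ^ q = z}" using c1 c2 card_mono[OF fin sub] by simp
  then show ?thesis using card_subset_eq[OF fin sub] by (simp add: q_def)
qed

end

lemma subfield_gen: "is_subfield (gen_field S)"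
  unfolding gen_field_def is_subfield_def by auto

lemma gen_field_sup: "S \<subseteq> gen_field S"
  unfolding gen_field_def by auto

lemma gen_field_least: "is_subfield K \<Longrightarrow> S \<subseteq> K \<Longrightarrow> gen_field S \<subseteq> K"
  unfolding gen_field_def by auto

context
  fixes K :: "'a::field set"
  assumes K: "is_subfield K"
begin
lemma sf_0: "0 \<in> K" using K by (simp add: is_subfield_def)
lemma sf_1: "1 \<in> K" using K by (simp add: is_subfield_def)
lemma sf_add: "u \<in> K \<Longrightarrow> w \<in> K \<Longrightarrow> u + w \<in> K" using K by (simp add: is_subfield_def)
lemma sf_mult: "u \<in> K \<Longrightarrow> w \<in> K \<Longrightarrow> u * w \<in> K" using K by (simp add: is_subfield_def)
lemma sf_uminus: "u \<in> K \<Longrightarrow> - u \<in> K" using K by (simp add: is_subfield_def)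
lemma sf_inverse: "u \<in> K \<Longrightarrow> inverse u \<in> K" using K by (simp add: is_subfield_def)
lemma sf_diff: "u \<in> K \<Longrightarrow> w \<in> K \<Longrightarrow> u - w \<in> K"
  using sf_add[of u "-w"] sf_uminus[of w] by simp
lemma sf_divide: "u \<in> K \<Longrightarrow> w \<in> K \<Longrightarrow> u / w \<in> K"
  using sf_mult[of u "inverse w"] sf_inverse[of w] by (simp add: divide_inverse)
lemma sf_power: "u \<in> K \<Longrightarrow> u ^ k \<in> K"
  by (induction k) (simp_all add: sf_1 sf_mult)
end

section \<open>Transcendence transfer\<close>

lemma finite_deg_less: "finite {s :: 'f::{finite,zero} poly. degree s < m}"
proof -
  have "{s :: 'f poly. degree s < m} \<subseteq> Poly ` {xs. set xs \<subseteq> UNIV \<and> length xs = m}"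
  proof
    fix s :: "'f poly" assume "s \<in> {s. degree s < m}"
    then have d: "degree s < m" by simp
    have "s = Poly (map (coeff s) [0..<m])"
    proof (rule poly_eqI)
      fix i
      show "coeff s i = coeff (Poly (map (coeff s) [0..<m])) i"
        using d by (auto simp: nth_default_def coeff_eq_0)
    qed
    then show "s \<in> Poly ` {xs. set xs \<subseteq> UNIV \<and> length xs = m}" by force
  qed
  moreover have "finite (Poly ` {xs :: 'f list. set xs \<subseteq> UNIV \<and> length xs = m})"
    by (intro finite_imageI finite_lists_length_eq) simp
  ultimately show ?thesis by (rule finite_subset)
qed

context
  fixes \<iota> :: "'f::{finite,field} \<Rightarrow> 'a::field"
  assumes hom: "is_field_hom \<iota>"
begin

lemma alg_range_finite:
  assumes p0: "p \<noteq> 0" and pz: "Ev \<iota> z p = 0"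
  shows "finite (range (Ev \<iota> z))"
proof -
  have "degree p \<noteq> 0"
  proof
    assume "degree p = 0"
    then obtain c where "p = [:c:]" by (rule degree_eq_zeroE)
    then show False using p0 pz by (simp add: Ev_const[OF hom] hom_eq0[OF hom])
  qed
  have "range (Ev \<iota> z) \<subseteq> Ev \<iota> z ` {s. degree s < degree p}"
  proof
    fix t assume "t \<in> range (Ev \<iota> z)"
    then obtain r where t: "t = Ev \<iota> z r" by auto
    have "Ev \<iota> z r = Ev \<iota> z (r div p * p + r mod p)" by simp
    also have "\<dots> = Ev \<iota> z (r div p) * Ev \<iota> z p + Ev \<iota> z (r mod p)"
      by (simp only: Ev_add[OF hom] Ev_mult[OF hom])
    also have "\<dots> = Ev \<iota> z (r mod p)" by (simp add: pz)
    finally have "t = Ev \<iota> z (r mod p)" using t by simp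
    moreover have "degree (r mod p) < degree p"
      using degree_mod_less[OF p0, of r] \<open>degree p \<noteq> 0\<close> by auto
    ultimately show "t \<in> Ev \<iota> z ` {s. degree s < degree p}" by auto
  qed
  then show ?thesis using finite_deg_less by (rule finite_subset[OF _ finite_imageI])
qed

lemma transc_transfer:
  assumes tx: "transcendental_over \<iota> x" and d0: "Ev \<iota> z d \<noteq> 0" and xe: "x * Ev \<iota> z d = Ev \<iota> z e"
  shows "transcendental_over \<iota> z"
  unfolding transcendental_over_def
proof (intro allI impI notI)
  fix p :: "'f poly"
  assume p0: "p \<noteq> 0" and pz0: "poly (map_poly \<iota> p) z = 0"
  then have pz: "Ev \<iota> z p = 0" by (simp add: Ev_def)
  define A where "A = range (Ev \<iota> z)"
  have fA: "finite A" unfolding A_def by (rule alg_range_finite[OF p0 pz])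
  have "(\<lambda>t. Ev \<iota> z d * t) ` A = A"
  proof (rule endo_inj_surj[OF fA])
    show "(\<lambda>t. Ev \<iota> z d * t) ` A \<subseteq> A"
      unfolding A_def by (auto simp flip: Ev_mult[OF hom])
    show "inj_on (\<lambda>t. Ev \<iota> z d * t) A"
      using d0 by (auto intro!: inj_onI)
  qed
  moreover have "Ev \<iota> z e \<in> A" unfolding A_def by simp
  ultimately obtain t where tA: "t \<in> A" and "Ev \<iota> z d * t = Ev \<iota> z e" by force
  then have "Ev \<iota> z d * t = Ev \<iota> z d * x" using xe by (simp add: mult.commute)
  then have "t = x" using d0 by simp
  then obtain r where xr: "x = Ev \<iota> z r" using tA unfolding A_def by auto
  have pw: "(\<lambda>k. x ^ k) ` UNIV \<subseteq> A"
    unfolding A_def xr by (auto simp flip: Ev_power[OF hom])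
  have "\<not> inj (\<lambda>k::nat. x ^ k)"
  proof
    assume "inj (\<lambda>k::nat. x ^ k)"
    then have "infinite ((\<lambda>k::nat. x ^ k) ` UNIV)"
      using finite_imageD infinite_UNIV_nat by blast
    then show False using pw fA finite_subset by blast
  qed
  then obtain i j :: nat where ij: "i \<noteq> j" "x ^ i = x ^ j"
    unfolding inj_def by blast
  define pp :: "'f poly" where "pp = monom 1 i - monom 1 j"
  have "coeff pp i = 1" using ij by (simp add: pp_def)
  then have "pp \<noteq> 0" by auto
  moreover have "poly (map_poly \<iota> pp) x = 0"
    using ij by (simp add: pp_def map_poly_hom_diff[OF hom] map_poly_monom hom_simps[OF hom] poly_monom)
  ultimately show False using tx unfolding transcendental_over_def by blast
qed

end

context
  fixes \<iota> :: "'f::{finite,field} \<Rightarrow> 'a::field"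
  assumes hom: "is_field_hom \<iota>"
begin

lemma eval2_alt: "eval2 \<iota> Q v y = poly (map_poly (Ev \<iota> v) Q) y"
  unfolding eval2_def Ev_def by (rule refl)

lemma eval2_mult: "eval2 \<iota> (Q1 * Q2) v y = eval2 \<iota> Q1 v y * eval2 \<iota> Q2 v y"
  unfolding eval2_alt
  by (subst map_poly_mult_gen) (simp_all add: Ev_0[OF hom] Ev_add[OF hom] Ev_mult[OF hom])

lemma eval2_add: "eval2 \<iota> (Q1 + Q2) v y = eval2 \<iota> Q1 v y + eval2 \<iota> Q2 v y"
  unfolding eval2_alt
  by (subst map_poly_add_gen) (simp_all add: Ev_0[OF hom] Ev_add[OF hom])

lemma eval2_diff: "eval2 \<iota> (Q1 - Q2) v y = eval2 \<iota> Q1 v y - eval2 \<iota> Q2 v y"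
proof -
  have "map_poly (Ev \<iota> v) (Q1 - Q2) = map_poly (Ev \<iota> v) Q1 - map_poly (Ev \<iota> v) Q2"
    by (intro poly_eqI) (simp add: coeff_map_poly Ev_0[OF hom] Ev_diff[OF hom])
  then show ?thesis unfolding eval2_alt by simp
qed

lemma eval2_smult: "eval2 \<iota> (smult c Q) v y = Ev \<iota> v c * eval2 \<iota> Q v y"
  unfolding eval2_alt
  by (subst map_poly_smult) (simp_all add: Ev_0[OF hom] Ev_mult[OF hom])

lemma eval2_monom: "eval2 \<iota> (monom c k) v y = Ev \<iota> v c * y ^ k"
  unfolding eval2_alt by (simp add: map_poly_monom Ev_0[OF hom] poly_monom)

lemma eval2_const: "eval2 \<iota> [:c:] v y = Ev \<iota> v c"
  unfolding eval2_alt by (simp add: map_poly_pCons Ev_0[OF hom])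

end


definition Dq :: "'f::{finite,field} poly" where
  "Dq = [:0,1:] ^ card (UNIV :: 'f set) - [:0,1:]"

definition PP :: "'f::{finite,field} poly \<Rightarrow> 'f poly poly" where
  "PP N = monom Dq (card (UNIV :: 'f set) - 1) + monom N 0"

lemma Dq_alt: "(Dq :: 'f::{finite,field} poly) = monom 1 (card (UNIV :: 'f set)) - monom 1 1"
  by (simp add: Dq_def monom_altdef)

lemma Dq_coeff0: "coeff (Dq :: 'f::{finite,field} poly) 0 = 0"
  using card_ge2[where 'f='f] by (simp add: Dq_alt)

lemma Dq_poly: "poly (Dq :: 'f::{finite,field} poly) c = 0"
  by (simp add: Dq_def ff_power_card)

lemma Dq_degree: "degree (Dq :: 'f::{finite,field} poly) = card (UNIV :: 'f set)"
proof -
  have e: "(Dq :: 'f poly) = monom 1 (card (UNIV :: 'f set)) + monom (-1) 1"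
    by (simp add: Dq_alt minus_monom)
  have d1: "degree (monom (1::'f) (card (UNIV :: 'f set))) = card (UNIV :: 'f set)"
    by (simp add: degree_monom_eq)
  have d2: "degree (monom (-1::'f) 1) = 1" by (simp add: degree_monom_eq)
  show ?thesis unfolding e
    by (subst degree_add_eq_left) (use d1 d2 card_ge2[where 'f='f] in simp_all)
qed

lemma Dq_nz: "(Dq :: 'f::{finite,field} poly) \<noteq> 0"
  using Dq_degree[where 'f='f] card_ge2[where 'f='f] by auto

lemma coeff1_mult_Dq: "coeff (\<alpha> * (Dq :: 'f::{finite,field} poly)) 1 = - coeff \<alpha> 0"
proof -
  have "\<alpha> * Dq = monom 1 (card (UNIV :: 'f set)) * \<alpha> - monom 1 1 * \<alpha>"
    by (simp add: Dq_alt right_diff_distrib mult.commute)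
  then show ?thesis using card_ge2[where 'f='f] by (simp add: coeff_monom_mult)
qed

lemma Dq_dvd_vanish:
  fixes t :: "'f::{finite,field} poly"
  assumes "\<And>c. poly t c = 0"
  shows "Dq dvd t"
proof -
  define r where "r = t mod Dq"
  have "t div Dq * Dq + r = t" by (simp add: r_def)
  then have pr: "poly r c = 0" for c
    using assms[of c] Dq_poly[of c] by (metis add_0 mult_zero_right poly_add poly_mult)
  have "r = 0"
  proof (rule ccontr)
    assume r0: "r \<noteq> 0"
    then have "degree r < card (UNIV :: 'f set)"
      using degree_mod_less[OF Dq_nz, of t] by (simp add: r_def Dq_degree)
    moreover have "card {c. poly r c = 0} \<le> degree r" by (rule card_poly_roots_bound[OF r0])
    ultimately show False using pr by simp
  qed
  then show ?thesis by (simp add: r_def mod_eq_0_iff_dvd)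
qed

lemma PP_degree: "degree (PP N :: 'f::{finite,field} poly poly) = card (UNIV :: 'f set) - 1"
proof -
  have "degree (monom N 0) = 0" by (simp add: monom_0)
  moreover have "degree (monom (Dq :: 'f poly) (card (UNIV :: 'f set) - 1)) = card (UNIV :: 'f set) - 1"
    using Dq_nz[where 'f='f] by (simp add: degree_monom_eq)
  ultimately show ?thesis using card_ge2[where 'f='f] unfolding PP_def
    by (subst degree_add_eq_left) simp_all
qed

lemma PP_coeff: "coeff (PP N :: 'f::{finite,field} poly poly) (card (UNIV :: 'f set) - 1) = Dq"
  "coeff (PP N :: 'f::{finite,field} poly poly) 0 = N"
  using card_ge2[where 'f='f] by (simp_all add: PP_def)

lemma PP_lc: "lead_coeff (PP N :: 'f::{finite,field} poly poly) = Dq"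
  by (simp only: PP_degree PP_coeff)

lemma PP_nz: "(PP N :: 'f::{finite,field} poly poly) \<noteq> 0"
  using PP_coeff(1)[of N] Dq_nz by auto

lemma PP_alt: "(PP N :: 'f::{finite,field} poly poly) = smult Dq (monom 1 (card (UNIV :: 'f set) - 1)) + [:N:]"
  by (simp add: PP_def smult_monom monom_0)

definition red0 :: "'f::field poly poly \<Rightarrow> 'f poly" where
  "red0 Q = map_poly (\<lambda>c. poly c 0) Q"

lemma red0_mult: "red0 (Q1 * Q2) = red0 Q1 * red0 Q2"
  unfolding red0_def by (rule map_poly_mult_gen) simp_all

lemma red0_add: "red0 (Q1 + Q2) = red0 Q1 + red0 Q2"
  unfolding red0_def by (rule map_poly_add_gen) simp_all

lemma red0_smult: "red0 (smult c Q) = smult (poly c 0) (red0 Q)"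
  unfolding red0_def by (rule map_poly_smult) simp_all

lemma coeff_red0: "coeff (red0 Q) i = poly (coeff Q i) 0"
  unfolding red0_def by (simp add: coeff_map_poly)

lemma red0_PP: "red0 (PP N :: 'f::{finite,field} poly poly) = [:poly N 0:]"
  unfolding PP_def red0_add
  by (simp add: red0_def map_poly_monom Dq_poly monom_0 map_poly_pCons del: poly_0_coeff_0)

lemma factor_X:
  fixes R :: "'f::field poly poly"
  assumes "red0 R = 0"
  shows "R = smult [:0,1:] (map_poly (\<lambda>c. c div [:0,1:]) R)"
proof (rule poly_eqI)
  fix i
  have "poly (coeff R i) 0 = 0" using assms coeff_red0[of R i] by simp
  then have "[:0,1:] dvd coeff R i" using poly_eq_0_iff_dvd[of "coeff R i" 0] by simp
  then show "coeff R i = coeff (smult [:0,1:] (map_poly (\<lambda>c. c div [:0,1:]) R)) i"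
    using dvd_mult_div_cancel[of "[:0,1:]" "coeff R i"] by (simp add: coeff_map_poly)
qed

section \<open>The kernel\<close>

context
  fixes \<iota> :: "'f::{finite,field} \<Rightarrow> 'a::field" and v y :: 'a and N :: "'f poly"
  assumes hom: "is_field_hom \<iota>"
    and tv: "transcendental_over \<iota> v"
    and NF: "\<And>c. poly N c \<noteq> 0"
    and P0: "eval2 \<iota> (PP N) v y = 0"
begin

lemma Ev_v_nz: "r \<noteq> 0 \<Longrightarrow> Ev \<iota> v r \<noteq> 0"
  using tv by (simp add: transcendental_over_def Ev_def)

lemma v_nz: "v \<noteq> 0"
  using Ev_v_nz[of "[:0,1:]"] by (simp add: Ev_X[OF hom])

lemma deg_pos: "R \<noteq> 0 \<Longrightarrow> eval2 \<iota> R v y = 0 \<Longrightarrow> degree R \<noteq> 0"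
  by (metis Ev_v_nz degree_eq_zeroE eval2_const[OF hom] pCons_eq_0_iff)

lemma K0:
  "\<alpha> \<noteq> 0 \<Longrightarrow> R \<noteq> 0 \<Longrightarrow> eval2 \<iota> R v y = 0 \<Longrightarrow> degree R < card (UNIV :: 'f set) - 1
    \<Longrightarrow> R * S = smult \<alpha> (PP N) \<Longrightarrow> False"
proof (induction "degree \<alpha>" arbitrary: \<alpha> R S rule: less_induct)
  case less
  note a0 = less.prems(1) and R0 = less.prems(2) and ER = less.prems(3) and dR = less.prems(4)
    and RS = less.prems(5)
  define n where "n = card (UNIV :: 'f set) - 1"
  have dR1: "degree R \<noteq> 0" by (rule deg_pos[OF R0 ER])
  have S0: "S \<noteq> 0" using RS a0 PP_nz[of N] by auto
  have dRS: "degree R + degree S = n"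
    using RS R0 S0 a0 by (metis degree_mult_eq degree_smult_eq PP_degree n_def)
  show False
  proof (cases "poly \<alpha> 0 = 0")
    case True
    then have "[:0,1:] dvd \<alpha>" using poly_eq_0_iff_dvd[of \<alpha> 0] by simp
    then obtain \<alpha>' where a': "\<alpha> = [:0,1:] * \<alpha>'" by (rule dvdE)
    have a'0: "\<alpha>' \<noteq> 0" using a' a0 by auto
    have da': "degree \<alpha>' < degree \<alpha>" using a' a'0 by (simp add: degree_mult_eq)
    have "red0 R * red0 S = 0"
      using RS True by (metis red0_mult red0_smult smult_0_left)
    then consider "red0 R = 0" | "red0 S = 0" by auto
    then show False
    proof cases
      case 1
      define R' where "R' = map_poly (\<lambda>c. c div [:0,1:]) R"
      have RR': "R = smult [:0,1:] R'" using factor_X[OF 1] by (simp add: R'_def)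
      have R'0: "R' \<noteq> 0" using RR' R0 by auto
      have "v * eval2 \<iota> R' v y = 0" using ER RR' by (simp add: eval2_smult[OF hom] Ev_X[OF hom])
      then have ER': "eval2 \<iota> R' v y = 0" using v_nz by simp
      have "smult [:0,1:] (R' * S) = smult [:0,1:] (smult \<alpha>' (PP N))"
        using RS RR' a' by (simp add: mult.commute mult.left_commute)
      then have "R' * S = smult \<alpha>' (PP N)" by (rule smult_cancel[rotated]) simp
      moreover have dR': "degree R' < card (UNIV :: 'f set) - 1" using dR RR' by simp
      ultimately show False by (intro less.hyps[OF da' a'0 R'0 ER' dR'])
    next
      case 2
      define S' where "S' = map_poly (\<lambda>c. c div [:0,1:]) S"
      have SS': "S = smult [:0,1:] S'" using factor_X[OF 2] by (simp add: S'_def)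
      have "smult [:0,1:] (R * S') = smult [:0,1:] (smult \<alpha>' (PP N))"
        using RS SS' a' by (simp add: mult.commute mult.left_commute)
      then have "R * S' = smult \<alpha>' (PP N)" by (rule smult_cancel[rotated]) simp
      then show False by (intro less.hyps[OF da' a'0 R0 ER dR])
    qed
  next
    case False
    have "red0 R * red0 S = [:poly \<alpha> 0 * poly N 0:]"
      using RS by (metis red0_mult red0_smult red0_PP smult_pCons smult_0_right)
    moreover have "poly \<alpha> 0 * poly N 0 \<noteq> 0" using False NF by simp
    ultimately have "degree (red0 R) + degree (red0 S) = 0" "red0 R \<noteq> 0" "red0 S \<noteq> 0"
      by (metis degree_mult_eq degree_pCons_0 mult_zero_left mult_zero_right pCons_eq_0_iff)+
    then have dd: "degree (red0 R) = 0" "degree (red0 S) = 0" by auto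
    have dS1: "degree S \<noteq> 0" using dRS dR n_def by simp
    have l1: "poly (lead_coeff R) 0 = 0"
      using dd(1) dR1 coeff_red0[of R "degree R"] by (metis coeff_eq_0 neq0_conv)
    have l2: "poly (lead_coeff S) 0 = 0"
      using dd(2) dS1 coeff_red0[of S "degree S"] by (metis coeff_eq_0 neq0_conv)
    obtain k1 where k1: "lead_coeff R = [:0,1:] * k1"
      using l1 poly_eq_0_iff_dvd[of "lead_coeff R" 0] by (auto elim: dvdE)
    obtain k2 where k2: "lead_coeff S = [:0,1:] * k2"
      using l2 poly_eq_0_iff_dvd[of "lead_coeff S" 0] by (auto elim: dvdE)
    have "lead_coeff R * lead_coeff S = lead_coeff (smult \<alpha> (PP N))"
      using RS by (metis lead_coeff_mult)
    also have "\<dots> = \<alpha> * Dq"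
      by (simp only: lead_coeff_smult PP_lc)
    finally have "\<alpha> * Dq = monom 1 2 * (k1 * k2)"
      using k1 k2 by (simp add: monom_altdef power2_eq_square mult_ac)
    then have "coeff (\<alpha> * Dq) 1 = coeff (monom 1 2 * (k1 * k2)) 1" by simp
    then have "coeff \<alpha> 0 = 0" using coeff1_mult_Dq[of \<alpha>] by (simp add: coeff_monom_mult)
    then show False using False by (simp add: poly_0_coeff_0)
  qed
qed

lemma K1: "R \<noteq> 0 \<Longrightarrow> eval2 \<iota> R v y = 0 \<Longrightarrow> degree R \<ge> card (UNIV :: 'f set) - 1"
proof (induction "degree R" arbitrary: R rule: less_induct)
  case less
  show ?case
  proof (rule ccontr)
    assume dR: "\<not> degree R \<ge> card (UNIV :: 'f set) - 1"
    obtain T r where pd: "pseudo_divmod (PP N) R = (T, r)" by fastforce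
    define c where "c = coeff R (degree R) ^ (Suc (degree (PP N)) - degree R)"
    have c0: "c \<noteq> 0" using less.prems(1) by (simp add: c_def)
    have eq: "smult c (PP N) = R * T + r" using pseudo_divmod(1)[OF less.prems(1) pd] by (simp add: c_def)
    have rd: "r = 0 \<or> degree r < degree R" by (rule pseudo_divmod(2)[OF less.prems(1) pd])
    have "eval2 \<iota> r v y = eval2 \<iota> (smult c (PP N)) v y - eval2 \<iota> (R * T) v y"
      using eq by (simp add: eval2_add[OF hom])
    also have "\<dots> = 0" using P0 less.prems(2) by (simp add: eval2_smult[OF hom] eval2_mult[OF hom])
    finally have Er: "eval2 \<iota> r v y = 0" .
    have "r = 0"
    proof (rule ccontr)
      assume "r \<noteq> 0"
      then have "degree r < degree R" and "degree r \<ge> card (UNIV :: 'f set) - 1"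
        using rd less.hyps[of r] Er by auto
      then show False using dR by simp
    qed
    then have "R * T = smult c (PP N)" using eq by simp
    then show False using K0[OF c0 less.prems(1) less.prems(2)] dR by simp
  qed
qed

lemma K2':
  assumes "PP N dvd smult Dq Z"
  shows "PP N dvd Z"
proof -
  define n where "n = card (UNIV :: 'f set) - 1"
  from assms obtain T where ZT: "smult Dq Z = PP N * T" by (rule dvdE)
  have "PP N * T = smult Dq (monom 1 n * T) + smult N T"
    by (simp add: PP_alt n_def distrib_right)
  then have "smult N T = smult Dq (Z - monom 1 n * T)"
    using ZT by (simp add: smult_diff_right)
  then have ci: "N * coeff T i = Dq * coeff (Z - monom 1 n * T) i" for i
    by (metis coeff_smult)
  have dv: "Dq dvd coeff T i" for i
  proof (rule Dq_dvd_vanish)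
    fix c
    have "poly N c * poly (coeff T i) c = 0"
      using arg_cong[OF ci[of i], of "\<lambda>p. poly p c"] by (simp add: Dq_poly)
    then show "poly (coeff T i) c = 0" using NF by simp
  qed
  define T' where "T' = map_poly (\<lambda>c. c div Dq) T"
  have TT': "T = smult Dq T'"
  proof (rule poly_eqI)
    fix i show "coeff T i = coeff (smult Dq T') i"
      using dv[of i] by (simp add: T'_def coeff_map_poly)
  qed
  have "smult Dq Z = smult Dq (PP N * T')" using ZT TT' by simp
  then have "Z = PP N * T'" by (rule smult_cancel[rotated]) (rule Dq_nz)
  then show ?thesis by simp
qed

lemma K2'': "PP N dvd smult (Dq ^ e) Z \<Longrightarrow> PP N dvd Z"
proof (induction e arbitrary: Z)
  case 0 then show ?case by simp
next
  case (Suc e)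
  have "smult (Dq ^ Suc e) Z = smult Dq (smult (Dq ^ e) Z)" by (simp add: mult.commute)
  then have "PP N dvd smult (Dq ^ e) Z" using Suc.prems K2' by metis
  then show ?case by (rule Suc.IH)
qed

lemma K2: "eval2 \<iota> Q v y = 0 \<longleftrightarrow> PP N dvd Q"
proof
  assume EQ: "eval2 \<iota> Q v y = 0"
  obtain T r where pd: "pseudo_divmod Q (PP N) = (T, r)" by fastforce
  define e where "e = Suc (degree Q) - degree (PP N)"
  have eq: "smult (Dq ^ e) Q = PP N * T + r"
    using pseudo_divmod(1)[OF PP_nz pd] unfolding PP_lc e_def .
  have rd: "r = 0 \<or> degree r < degree (PP N)" by (rule pseudo_divmod(2)[OF PP_nz pd])
  have "eval2 \<iota> r v y = eval2 \<iota> (smult (Dq ^ e) Q) v y - eval2 \<iota> (PP N * T) v y"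
    using eq by (simp add: eval2_add[OF hom])
  also have "\<dots> = 0" using P0 EQ by (simp add: eval2_smult[OF hom] eval2_mult[OF hom])
  finally have Er: "eval2 \<iota> r v y = 0" .
  have "r = 0"
  proof (rule ccontr)
    assume "r \<noteq> 0"
    then show False using K1[OF _ Er] rd by (simp add: PP_degree)
  qed
  then have "PP N dvd smult (Dq ^ e) Q" using eq by simp
  then show "PP N dvd Q" by (rule K2'')
next
  assume "PP N dvd Q"
  then obtain T where "Q = PP N * T" by (rule dvdE)
  then show "eval2 \<iota> Q v y = 0" using P0 by (simp add: eval2_mult[OF hom])
qed

end


lemma M_noroot:
  fixes a b :: "'f::field"
  assumes irr: "irreducible [:b, a, 1:]"
  shows "poly [:b, a, 1:] c \<noteq> 0"
proof
  assume "poly [:b, a, 1:] c = 0"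
  then have "[:-c, 1:] dvd [:b, a, 1:]" using poly_eq_0_iff_dvd by blast
  then obtain g where g: "[:b, a, 1:] = [:-c, 1:] * g" by (rule dvdE)
  have g0: "g \<noteq> 0" using g by auto
  have "degree [:b, a, 1::'f:] = 2" by simp
  moreover have "degree ([:-c, 1:] * g) = 1 + degree g"
    by (subst degree_mult_eq) (use g0 in auto)
  ultimately have dg: "degree g = 1" using g by simp
  from irreducibleD[OF irr g] have "[:-c, 1:] dvd 1 \<or> g dvd 1" .
  then show False
    using dg g0 by (auto simp: is_unit_iff_degree)
qed

lemma alg_root_exists:
  fixes c0 c1 cq :: "'a::alg_closed_field"
  assumes "k \<ge> 2"
  shows "\<exists>w. w ^ (k + 1) + cq * w ^ k + c1 * w + c0 = 0"
proof -
  define p where "p = monom 1 (k + 1) + (monom cq k + [:c0, c1:])"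
  have "degree (monom cq k + [:c0, c1:]) \<le> k"
    using assms by (intro degree_add_le) (auto intro: order.trans[OF degree_monom_le])
  then have "degree p = k + 1" unfolding p_def
    by (subst degree_add_eq_left) (simp_all add: degree_monom_eq)
  then obtain w where "poly p w = 0" using alg_closed_imp_poly_has_root[of p] by auto
  then show ?thesis by (intro exI[of _ w]) (simp add: p_def poly_monom algebra_simps)
qed

context
  fixes \<iota> :: "'f::{finite,field} \<Rightarrow> 'a::alg_closed_field" and x :: 'a and a b \<gamma> :: 'f and w lam vv :: 'a
  assumes hom: "is_field_hom \<iota>"
    and tx: "transcendental_over \<iota> x"
    and irr: "irreducible [:b, a, 1:]"
    and g0: "\<gamma> \<noteq> 0"
    and hw: "w ^ (card (UNIV :: 'f set) + 1) - x * w ^ card (UNIV :: 'f set) + (x + \<iota> a) * w + \<iota> b = 0"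
    and hl: "lam ^ (card (UNIV :: 'f set) - 1) = w - x"
    and wv: "w = \<iota> \<gamma> * vv"
begin

lemma q2: "card (UNIV :: 'f set) \<ge> 2" by (rule card_ge2)

lemma powq: "z ^ card (UNIV :: 'f set) = z * z ^ (card (UNIV :: 'f set) - 1)"
  using q2 by (metis Suc_diff_1 le_trans less_eq_Suc_le one_le_numeral power_Suc zero_less_one)

lemma xM: "x * x + \<iota> a * x + \<iota> b \<noteq> 0"
proof
  assume h: "x * x + \<iota> a * x + \<iota> b = 0"
  have "poly (map_poly \<iota> [:b, a, 1:]) x = x * x + \<iota> a * x + \<iota> b"
    by (simp add: map_poly_pCons hom_simps[OF hom] algebra_simps)
  then show False using tx h unfolding transcendental_over_def by force
qed

lemma lam_nz: "lam \<noteq> 0"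
proof
  assume "lam = 0"
  then have "w = x" using hl q2 by (simp add: power_0_left)
  then have "x * x + \<iota> a * x + \<iota> b = 0" using hw by (simp add: algebra_simps power_Suc)
  then show False using xM by simp
qed

lemma xw: "x * (w ^ card (UNIV :: 'f set) - w) = w ^ (card (UNIV :: 'f set) + 1) + \<iota> a * w + \<iota> b"
  using hw by (simp add: algebra_simps)

lemma wq: "w ^ card (UNIV :: 'f set) \<noteq> w"
proof
  assume h: "w ^ card (UNIV :: 'f set) = w"
  then have "w \<in> range \<iota>" using roots_Xq_X[OF hom] by blast
  then obtain c where c: "w = \<iota> c" by auto
  have "w ^ (card (UNIV :: 'f set) + 1) + \<iota> a * w + \<iota> b = 0" using xw h by simp
  then have "w * w + \<iota> a * w + \<iota> b = 0" using h by (simp add: power_Suc2 mult.commute)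
  then have "\<iota> (poly [:b, a, 1:] c) = 0" using c by (simp add: hom_simps[OF hom] algebra_simps)
  then show False using M_noroot[OF irr] hom_eq0[OF hom] by blast
qed

lemma ig0: "\<iota> \<gamma> \<noteq> 0" using g0 hom_eq0[OF hom] by simp

lemma w_vv: "w = \<iota> \<gamma> * vv" by (rule wv)

lemma tv: "transcendental_over \<iota> vv"
proof (rule transc_transfer[OF hom tx])
  define X :: "'f poly" where "X = smult \<gamma> [:0,1:]"
  have EX: "Ev \<iota> vv X = w" by (simp add: X_def Ev_pCons[OF hom] Ev_0[OF hom] hom0[OF hom] w_vv mult.commute)
  show "Ev \<iota> vv (X ^ card (UNIV :: 'f set) - X) \<noteq> 0" using wq by (simp add: Ev_diff[OF hom] Ev_power[OF hom] EX)
  show "x * Ev \<iota> vv (X ^ card (UNIV :: 'f set) - X) = Ev \<iota> vv (X ^ (card (UNIV :: 'f set) + 1) + smult a X + [:b:])"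
    using xw by (simp add: Ev_diff[OF hom] Ev_power[OF hom] Ev_add[OF hom] Ev_mult[OF hom] Ev_smult[OF hom] Ev_const[OF hom] EX)
qed

lemma NF: "poly [:b / \<gamma>, a, \<gamma>:] c \<noteq> 0"
proof
  assume "poly [:b / \<gamma>, a, \<gamma>:] c = 0"
  then have "\<gamma> * poly [:b / \<gamma>, a, \<gamma>:] c = 0" by simp
  then have "poly [:b, a, 1:] (\<gamma> * c) = 0" using g0 by (simp add: algebra_simps)
  then show False using M_noroot[OF irr] by blast
qed

lemma P0: "eval2 \<iota> (PP [:b / \<gamma>, a, \<gamma>:]) vv lam = 0"
proof -
  have wqv: "w ^ card (UNIV :: 'f set) = \<iota> \<gamma> * vv ^ card (UNIV :: 'f set)" by (simp add: w_vv frob_mult_const[OF hom])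
  have "eval2 \<iota> (PP [:b / \<gamma>, a, \<gamma>:]) vv lam = (vv ^ card (UNIV :: 'f set) - vv) * (w - x) + (\<iota> (b / \<gamma>) + vv * (\<iota> a + vv * \<iota> \<gamma>))"
    unfolding PP_def
    using hl by (simp add: eval2_add[OF hom] eval2_monom[OF hom] hom1[OF hom] Dq_def Ev_diff[OF hom] Ev_power[OF hom] Ev_X[OF hom] Ev_pCons[OF hom] Ev_0[OF hom] hom0[OF hom])
  also have "\<iota> \<gamma> * \<dots> = (w ^ card (UNIV :: 'f set) - w) * (w - x) + \<iota> b + \<iota> a * w + w * w"
    using ig0 by (simp add: wqv w_vv hom_divide[OF hom] frob_const[OF hom] algebra_simps)
  also have "\<dots> = 0" using xw by (simp add: power_Suc2 algebra_simps)
  finally show ?thesis using ig0 by simp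
qed

lemma kernel: "eval2 \<iota> Q vv lam = 0 \<longleftrightarrow> PP [:b / \<gamma>, a, \<gamma>:] dvd Q"
  by (rule K2[OF hom tv NF P0])

end

definition CCf :: "('f::field \<Rightarrow> 'a::field) \<Rightarrow> 'a \<Rightarrow> 'f \<Rightarrow> 'f \<Rightarrow> nat \<Rightarrow> 'a \<Rightarrow> 'a" where
  "CCf \<iota> x a b q z = \<iota> b * z + \<iota> a * carlitz_phi x q z + carlitz_phi x q (carlitz_phi x q z)"

context
  fixes \<iota> :: "'f::{finite,field} \<Rightarrow> 'a::alg_closed_field" and x :: 'a and a b \<gamma> :: 'f and w lam vv :: 'a
  assumes hom: "is_field_hom \<iota>"
    and tx: "transcendental_over \<iota> x"
    and irr: "irreducible [:b, a, 1:]"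
    and g0: "\<gamma> \<noteq> 0"
    and hw: "w ^ ((card (UNIV :: 'f set)) + 1) - x * w ^ (card (UNIV :: 'f set)) + (x + \<iota> a) * w + \<iota> b = 0"
    and hl: "lam ^ ((card (UNIV :: 'f set)) - 1) = w - x"
    and wv: "w = \<iota> \<gamma> * vv"
begin


lemma Pphi_add: "carlitz_phi x (card (UNIV :: 'f set)) (u + u') = carlitz_phi x (card (UNIV :: 'f set)) u + carlitz_phi x (card (UNIV :: 'f set)) u'"
  by (simp add: carlitz_phi_def frob_add[OF hom] algebra_simps)

lemma Pphi_smul: "carlitz_phi x (card (UNIV :: 'f set)) (\<iota> c * u) = \<iota> c * carlitz_phi x (card (UNIV :: 'f set)) u"
  by (simp add: carlitz_phi_def frob_mult_const[OF hom] frob_const[OF hom] algebra_simps)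

lemma Pphi_0: "carlitz_phi x (card (UNIV :: 'f set)) 0 = 0"
  using q2[OF hom tx irr g0 hw hl wv] by (simp add: carlitz_phi_def)

lemma CM: "carlitz_act \<iota> x (card (UNIV :: 'f set)) [:b, a, 1:] z = CCf \<iota> x a b (card (UNIV :: 'f set)) z"
  by (simp add: CCf_def carlitz_act_def numeral_2_eq_2 hom1[OF hom] algebra_simps)

lemma QCC_add: "CCf \<iota> x a b (card (UNIV :: 'f set)) (u + u') = CCf \<iota> x a b (card (UNIV :: 'f set)) u + CCf \<iota> x a b (card (UNIV :: 'f set)) u'"
  by (simp add: CCf_def Pphi_add algebra_simps)

lemma QCC_smul: "CCf \<iota> x a b (card (UNIV :: 'f set)) (\<iota> c * u) = \<iota> c * CCf \<iota> x a b (card (UNIV :: 'f set)) u"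
  unfolding CCf_def Pphi_smul by (simp add: algebra_simps)

lemma QCC_phi: "CCf \<iota> x a b (card (UNIV :: 'f set)) (carlitz_phi x (card (UNIV :: 'f set)) u) = carlitz_phi x (card (UNIV :: 'f set)) (CCf \<iota> x a b (card (UNIV :: 'f set)) u)"
  by (simp add: CCf_def Pphi_add Pphi_smul)

lemma Pphi_lam: "carlitz_phi x (card (UNIV :: 'f set)) lam = lam * w"
proof -
  have "carlitz_phi x (card (UNIV :: 'f set)) lam = lam * lam ^ ((card (UNIV :: 'f set)) - 1) + x * lam"
    by (simp add: carlitz_phi_def powq[OF hom tx irr g0 hw hl wv])
  also have "\<dots> = lam * (lam ^ ((card (UNIV :: 'f set)) - 1) + x)" by (simp add: algebra_simps)
  also have "\<dots> = lam * w" using hl by simp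
  finally show ?thesis .
qed

lemma QCC_lam: "CCf \<iota> x a b (card (UNIV :: 'f set)) lam = 0"
proof -
  have lq: "lam ^ (card (UNIV :: 'f set)) = lam * (w - x)" using hl by (simp add: powq[OF hom tx irr g0 hw hl wv])
  have "carlitz_phi x (card (UNIV :: 'f set)) (carlitz_phi x (card (UNIV :: 'f set)) lam) = carlitz_phi x (card (UNIV :: 'f set)) (lam * w)"
    by (simp only: Pphi_lam)
  also have "\<dots> = (lam * w) ^ (card (UNIV :: 'f set)) + x * (lam * w)" by (simp only: carlitz_phi_def)
  finally have "carlitz_phi x (card (UNIV :: 'f set)) (carlitz_phi x (card (UNIV :: 'f set)) lam) = lam ^ (card (UNIV :: 'f set)) * w ^ (card (UNIV :: 'f set)) + x * (lam * w)"
    by (simp add: power_mult_distrib)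
  then have "CCf \<iota> x a b (card (UNIV :: 'f set)) lam = lam * (w ^ ((card (UNIV :: 'f set)) + 1) - x * w ^ (card (UNIV :: 'f set)) + (x + \<iota> a) * w + \<iota> b)"
    by (simp add: CCf_def Pphi_lam lq algebra_simps)
  then show ?thesis using hw by simp
qed

lemma QCC_mu: "CCf \<iota> x a b (card (UNIV :: 'f set)) (lam * w) = 0"
  using QCC_phi[of lam] QCC_lam Pphi_0 Pphi_lam by simp

definition Cp :: "'a poly" where
  "Cp = monom 1 ((card (UNIV :: 'f set)) * (card (UNIV :: 'f set))) + (monom (x ^ (card (UNIV :: 'f set)) + x + \<iota> a) (card (UNIV :: 'f set)) + monom (x * x + \<iota> a * x + \<iota> b) 1)"

lemma poly_Cp: "poly Cp z = CCf \<iota> x a b (card (UNIV :: 'f set)) z"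
proof -
  have "carlitz_phi x (card (UNIV :: 'f set)) (carlitz_phi x (card (UNIV :: 'f set)) z) = z ^ ((card (UNIV :: 'f set)) * (card (UNIV :: 'f set))) + x ^ (card (UNIV :: 'f set)) * z ^ (card (UNIV :: 'f set)) + x * z ^ (card (UNIV :: 'f set)) + x * x * z"
    by (simp add: carlitz_phi_def frob_add[OF hom] power_mult_distrib power_mult algebra_simps)
  then show ?thesis by (simp add: CCf_def Cp_def poly_monom carlitz_phi_def algebra_simps)
qed

lemma Cp_degree: "degree Cp = (card (UNIV :: 'f set)) * (card (UNIV :: 'f set))"
proof -
  have q2': "(card (UNIV :: 'f set)) \<ge> 2" by (rule card_ge2)
  have lt: "(card (UNIV :: 'f set)) < (card (UNIV :: 'f set)) * (card (UNIV :: 'f set))" using q2' by simp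
  have "degree (monom (x ^ (card (UNIV :: 'f set)) + x + \<iota> a) (card (UNIV :: 'f set)) + monom (x * x + \<iota> a * x + \<iota> b) 1) \<le> (card (UNIV :: 'f set))"
    using q2' by (intro degree_add_le) (auto intro: order.trans[OF degree_monom_le])
  then have dl: "degree (monom (x ^ (card (UNIV :: 'f set)) + x + \<iota> a) (card (UNIV :: 'f set)) + monom (x * x + \<iota> a * x + \<iota> b) 1) < (card (UNIV :: 'f set)) * (card (UNIV :: 'f set))"
    using lt by linarith
  have dm: "degree (monom (1::'a) ((card (UNIV :: 'f set)) * (card (UNIV :: 'f set)))) = (card (UNIV :: 'f set)) * (card (UNIV :: 'f set))" by (simp add: degree_monom_eq)
  show ?thesis unfolding Cp_def
    by (subst degree_add_eq_left) (simp_all only: dl dm)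
qed

lemma Cp_nz: "Cp \<noteq> 0"
  using Cp_degree card_ge2[where 'f='f] by (metis degree_0 mult_is_0 not_numeral_le_zero)

lemma Lambda_eq_roots: "carlitz_torsion \<iota> x (card (UNIV :: 'f set)) [:b, a, 1:] = {z. poly Cp z = 0}"
  by (simp add: carlitz_torsion_def CM poly_Cp)

definition Smap :: "'f \<times> 'f \<Rightarrow> 'a" where
  "Smap = (\<lambda>(c0, c1). \<iota> c0 * lam + \<iota> c1 * (lam * w))"

lemma Smap_in: "CCf \<iota> x a b (card (UNIV :: 'f set)) (Smap c) = 0"
  by (cases c) (simp add: Smap_def QCC_add QCC_smul QCC_lam QCC_mu)

lemma Smap_inj: "inj Smap"
proof (rule injI)
  fix c d :: "'f \<times> 'f"
  assume h: "Smap c = Smap d"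
  obtain c0 c1 where c: "c = (c0, c1)" by fastforce
  obtain d0 d1 where d: "d = (d0, d1)" by fastforce
  have ln: "lam \<noteq> 0" by (rule lam_nz[OF hom tx irr g0 hw hl wv])
  have "lam * (\<iota> (c0 - d0) + \<iota> (c1 - d1) * w) = 0"
    using h by (simp add: c d Smap_def hom_diff[OF hom] algebra_simps)
  then have e: "\<iota> (c0 - d0) + \<iota> (c1 - d1) * w = 0" using ln by simp
  have "c1 = d1"
  proof (rule ccontr)
    assume "c1 \<noteq> d1"
    then have nz: "\<iota> (c1 - d1) \<noteq> 0" using hom_eq0[OF hom] by simp
    have "\<iota> (c1 - d1) * w = - \<iota> (c0 - d0)" using e by (simp add: eq_neg_iff_add_eq_0 add.commute)
    then have "w = - \<iota> (c0 - d0) / \<iota> (c1 - d1)" using nz by (simp add: field_simps mult.commute)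
    also have "\<dots> = \<iota> (- (c0 - d0) / (c1 - d1))" by (simp add: hom_divide[OF hom] hom_uminus[OF hom] hom_diff[OF hom] minus_divide_left)
    finally have "w = \<iota> (- (c0 - d0) / (c1 - d1))" .
    then have "w ^ (card (UNIV :: 'f set)) = w" by (simp add: frob_const[OF hom])
    then show False using wq[OF hom tx irr g0 hw hl wv] by simp
  qed
  then have "\<iota> (c0 - d0) = 0" using e by (simp add: hom0[OF hom])
  then have "c0 = d0" using hom_eq0[OF hom] by simp
  then show "c = d" using \<open>c1 = d1\<close> c d by simp
qed

lemma Lambda_eq: "carlitz_torsion \<iota> x (card (UNIV :: 'f set)) [:b, a, 1:] = range Smap"
proof -
  let ?L = "carlitz_torsion \<iota> x (card (UNIV :: 'f set)) [:b, a, 1:]"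
  have fin: "finite ?L" unfolding Lambda_eq_roots by (rule poly_roots_finite[OF Cp_nz])
  have cL: "card ?L \<le> (card (UNIV :: 'f set)) * (card (UNIV :: 'f set))" unfolding Lambda_eq_roots using card_poly_roots_bound[OF Cp_nz] Cp_degree by simp
  have sub: "range Smap \<subseteq> ?L" using Smap_in by (auto simp: Lambda_eq_roots poly_Cp)
  have cS: "card (range Smap) = (card (UNIV :: 'f set)) * (card (UNIV :: 'f set))"
    using Smap_inj by (simp add: card_image card_cartesian_product flip: UNIV_Times_UNIV)
  have "card (range Smap) = card ?L" using cL cS card_mono[OF fin sub] by simp
  then show ?thesis using card_subset_eq[OF fin sub] by simp
qed

lemma main_iso:
  "Fq_iso_function_field \<iota> (cyclotomic_ff \<iota> x (card (UNIV :: 'f set)) [:b, a, 1:]) (PP [:b / \<gamma>, a, \<gamma>:])"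
proof -
  define L where "L = cyclotomic_ff \<iota> x (card (UNIV :: 'f set)) [:b, a, 1:]"
  define G where "G = gen_field (range \<iota> \<union> {vv, lam})"
  have sL: "is_subfield L" unfolding L_def cyclotomic_ff_def by (rule subfield_gen)
  have sG: "is_subfield G" unfolding G_def by (rule subfield_gen)
  have sup1: "rat_fun_field \<iota> x \<union> carlitz_torsion \<iota> x (card (UNIV :: 'f set)) [:b, a, 1:] \<subseteq> L"
    unfolding L_def cyclotomic_ff_def by (rule gen_field_sup)
  have RL: "rat_fun_field \<iota> x \<subseteq> L" using sup1 by (rule subset_trans[rotated]) simp
  have LamL: "carlitz_torsion \<iota> x (card (UNIV :: 'f set)) [:b, a, 1:] \<subseteq> L" using sup1 by (rule subset_trans[rotated]) simp
  have sup2: "range \<iota> \<union> {x} \<subseteq> rat_fun_field \<iota> x"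
    unfolding rat_fun_field_def by (rule gen_field_sup)
  have iL: "range \<iota> \<subseteq> L" using sup2 RL by (meson Un_subset_iff subset_trans)
  have xL: "x \<in> L" using sup2 RL by (meson Un_subset_iff insert_subset subset_trans)
  have lamL: "lam \<in> L" using LamL QCC_lam by (auto simp: carlitz_torsion_def CM)
  have wL: "w \<in> L"
  proof -
    have "lam ^ ((card (UNIV :: 'f set)) - 1) + x \<in> L" by (rule sf_add[OF sL sf_power[OF sL lamL] xL])
    moreover have "lam ^ ((card (UNIV :: 'f set)) - 1) + x = w" using hl by simp
    ultimately show ?thesis by simp
  qed
  have vL: "vv \<in> L"
  proof -
    have "vv = w / \<iota> \<gamma>" using wv ig0[OF hom tx irr g0 hw hl wv] by simp
    then show ?thesis using sf_divide[OF sL wL] iL by auto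
  qed
  have GL: "G \<subseteq> L" unfolding G_def using iL vL lamL by (intro gen_field_least[OF sL]) auto
  have sup3: "range \<iota> \<union> {vv, lam} \<subseteq> G" unfolding G_def by (rule gen_field_sup)
  have iG: "range \<iota> \<subseteq> G" using sup3 by (meson Un_subset_iff)
  have vG: "vv \<in> G" and lamG: "lam \<in> G" using sup3 by (meson Un_subset_iff insert_subset)+
  have wG: "w \<in> G" using wv sf_mult[OF sG _ vG] iG by auto
  have xG: "x \<in> G"
  proof -
    have "x = (w ^ ((card (UNIV :: 'f set)) + 1) + \<iota> a * w + \<iota> b) / (w ^ (card (UNIV :: 'f set)) - w)"
      using xw[OF hom tx irr g0 hw hl wv] wq[OF hom tx irr g0 hw hl wv]
      by (simp add: field_simps)
    moreover have "w ^ ((card (UNIV :: 'f set)) + 1) + \<iota> a * w + \<iota> b \<in> G"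
      using iG wG by (intro sf_add[OF sG] sf_mult[OF sG] sf_power[OF sG]) auto
    moreover have "w ^ (card (UNIV :: 'f set)) - w \<in> G" using wG by (intro sf_diff[OF sG] sf_power[OF sG])
    ultimately show ?thesis using sf_divide[OF sG] by simp
  qed
  have RG: "rat_fun_field \<iota> x \<subseteq> G" unfolding rat_fun_field_def
    using iG xG by (intro gen_field_least[OF sG]) auto
  have LamG: "carlitz_torsion \<iota> x (card (UNIV :: 'f set)) [:b, a, 1:] \<subseteq> G"
  proof
    fix z assume "z \<in> carlitz_torsion \<iota> x (card (UNIV :: 'f set)) [:b, a, 1:]"
    then obtain c0 c1 where z: "z = \<iota> c0 * lam + \<iota> c1 * (lam * w)"
      unfolding Lambda_eq Smap_def by auto
    show "z \<in> G" unfolding z using iG lamG wG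
      by (intro sf_add[OF sG] sf_mult[OF sG]) auto
  qed
  have LG: "L \<subseteq> G" unfolding L_def cyclotomic_ff_def using RG LamG
    by (intro gen_field_least[OF sG]) auto
  have "G = L" using GL LG by blast
  then show ?thesis unfolding Fq_iso_function_field_def L_def[symmetric]
    using vL lamL kernel[OF hom tx irr g0 hw hl wv] unfolding G_def by blast
qed

end


theorem proposition3p1:
  fixes \<iota> :: "'f::{finite,field} \<Rightarrow> 'a::alg_closed_field"
    and x :: 'a and a b \<gamma> :: 'f
  assumes "is_field_hom \<iota>"
    and "transcendental_over \<iota> x"
    and "algebraic_over (rat_fun_field \<iota> x)"
    and "irreducible [:b, a, 1:]"
    and "\<gamma> \<noteq> 0"
  shows "Fq_iso_function_field \<iota>
           (cyclotomic_ff \<iota> x (card (UNIV :: 'f set)) [:b, a, 1:])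
           (monom ([:0, 1:] ^ card (UNIV :: 'f set) - [:0, 1:]) (card (UNIV :: 'f set) - 1) + monom [:b / \<gamma>, a, \<gamma>:] 0)"
proof -
  have q2: "card (UNIV :: 'f set) \<ge> 2" by (rule card_ge2)
  obtain w where hw0: "w ^ (card (UNIV :: 'f set) + 1) + (- x) * w ^ card (UNIV :: 'f set) + (x + \<iota> a) * w + \<iota> b = 0"
    using alg_root_exists[OF q2] by blast
  have hw: "w ^ (card (UNIV :: 'f set) + 1) - x * w ^ card (UNIV :: 'f set) + (x + \<iota> a) * w + \<iota> b = 0"
    using hw0 by simp
  obtain lam where hl: "lam ^ (card (UNIV :: 'f set) - 1) = w - x"
    using nth_root_exists[of "card (UNIV :: 'f set) - 1" "w - x"] q2 by auto
  define vv where "vv = w / \<iota> \<gamma>"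
  have ig: "\<iota> \<gamma> \<noteq> 0" using assms(5) hom_eq0[OF assms(1)] by simp
  have wv: "w = \<iota> \<gamma> * vv" using ig by (simp add: vv_def)
  have "monom ([:0, 1:] ^ card (UNIV :: 'f set) - [:0, 1:]) (card (UNIV :: 'f set) - 1) + monom [:b / \<gamma>, a, \<gamma>:] 0
        = PP [:b / \<gamma>, a, \<gamma>:]"
    by (simp add: PP_def Dq_def)
  then show ?thesis using main_iso[OF assms(1,2,4,5) hw hl wv] by simp
qed

end
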